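(* Let $G$ be a group generated by a set $X$, let $H$ be a normal subgroup of $G$, and let $\bar G=G/H$ with generating set $\bar X$ the image of $X$. Then $$\mathrm{pw}(\bar G,\bar X)\le \mathrm{pw}(G,X)\le \mathrm{pw}(\bar G,\bar X)+\mathrm{pw}(H,X).$$
   Context: A palindrome in a group generated by a set $X$ is an element represented by a reduced word in $X^{\pm1}$ reading the same forwards and backwards; $l_{\mathcal P}(g)$ is the minimal number of palindromes (in $X^{\pm1}$) whose product is $g$; $\mathrm{pw}(G,X)=\sup_{g\in G}l_{\mathcal P}(g)$. For a subgroup $H\le G$, $\mathrm{pw}(H,X)=\sup_{h\in H} l_{\mathcal P}(h)$, where palindromes are taken in $G$ with respect to the alphabet $X^{\pm1}$. *)

theory Defs
  imports "HOL-Algebra.Algebra" "HOL-Library.Extended_Nat"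
begin

text \<open>Words over the alphabet A^{+-1}: a letter is a pair (x, b), standing for x if b
  and for the inverse of x if not b.\<close>

definition eval_word :: "('a, 'b) monoid_scheme \<Rightarrow> ('a \<times> bool) list \<Rightarrow> 'a" where
  "eval_word G w = foldr (\<lambda>(x, b) acc. (if b then x else inv\<^bsub>G\<^esub> x) \<otimes>\<^bsub>G\<^esub> acc) w \<one>\<^bsub>G\<^esub>"

definition reduced_word :: "('a \<times> bool) list \<Rightarrow> bool" where
  "reduced_word w \<longleftrightarrow>
     (\<forall>i. Suc i < length w \<longrightarrow> \<not> (fst (w ! i) = fst (w ! Suc i) \<and> snd (w ! i) \<noteq> snd (w ! Suc i)))"

definition palindromes :: "('a, 'b) monoid_scheme \<Rightarrow> 'a set \<Rightarrow> 'a set" where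
  "palindromes G A = eval_word G ` {w. fst ` set w \<subseteq> A \<and> reduced_word w \<and> rev w = w}"

text \<open>Palindromic length: minimal number of palindromes whose product is g (infinity if none).\<close>
definition pal_length :: "('a, 'b) monoid_scheme \<Rightarrow> 'a set \<Rightarrow> 'a \<Rightarrow> enat" where
  "pal_length G A g = Inf ((\<lambda>ps. enat (length ps)) ` {ps.
      set ps \<subseteq> palindromes G A \<and> foldr (\<lambda>p acc. p \<otimes>\<^bsub>G\<^esub> acc) ps \<one>\<^bsub>G\<^esub> = g})"

definition pw_sub :: "('a, 'b) monoid_scheme \<Rightarrow> 'a set \<Rightarrow> 'a set \<Rightarrow> enat" where
  "pw_sub G A S = (SUP g\<in>S. pal_length G A g)"

definition pw :: "('a, 'b) monoid_scheme \<Rightarrow> 'a set \<Rightarrow> enat" where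
  "pw G A = pw_sub G A (carrier G)"

end

theory Submission imports Defs begin

fun red :: "('a \<times> bool) list \<Rightarrow> bool" where
  "red [] = True"
| "red [a] = True"
| "red (a # b # xs) = (\<not> (fst a = fst b \<and> snd a \<noteq> snd b) \<and> red (b # xs))"

definition canc :: "('a \<times> bool) \<Rightarrow> ('a \<times> bool) \<Rightarrow> bool" where
  "canc a b \<longleftrightarrow> fst a = fst b \<and> snd a \<noteq> snd b"

lemma canc_sym: "canc a b = canc b a" unfolding canc_def by auto

lemma reduced_red: "reduced_word w = red w"
proof (induction w rule: red.induct)
  case (3 a b xs)
  have "reduced_word (a # b # xs) \<longleftrightarrow>
     \<not> (fst a = fst b \<and> snd a \<noteq> snd b) \<and> reduced_word (b # xs)"
    unfolding reduced_word_def
    apply (rule iffI)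
     apply (intro conjI)
      apply (metis length_Cons nth_Cons_0 nth_Cons_Suc zero_less_Suc Suc_less_eq)
     apply (metis length_Cons nth_Cons_Suc Suc_less_eq)
    apply (intro allI impI)
    subgoal for i by (cases i) auto
    done
  then show ?case using 3 by simp
qed (auto simp: reduced_word_def)

lemma red_Cons: "red (a # ys) \<longleftrightarrow> red ys \<and> (ys = [] \<or> \<not> canc a (hd ys))"
  by (cases ys) (auto simp: canc_def)

lemma red_append: "red (xs @ ys) \<longleftrightarrow> red xs \<and> red ys \<and> (xs = [] \<or> ys = [] \<or> \<not> canc (last xs) (hd ys))"
  by (induction xs rule: red.induct) (auto simp: red_Cons canc_def)

lemma red_rev: "red (rev u) = red u"
  by (induction u rule: red.induct) (auto simp: red_append canc_def)

lemma not_red: "\<not> red w \<Longrightarrow> \<exists>u1 a b u2. w = u1 @ [a, b] @ u2 \<and> canc a b"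
proof (induction w rule: red.induct)
  case (3 a b xs)
  show ?case
  proof (cases "canc a b")
    case True then show ?thesis by (metis append_Cons append_Nil)
  next
    case False
    then have "\<not> red (b # xs)" using 3(2) by (simp add: canc_def)
    then obtain u1 c d u2 where "b # xs = u1 @ [c, d] @ u2" "canc c d" using 3(1) by blast
    then show ?thesis by (metis append_Cons)
  qed
qed auto

lemma eval_Cons: "eval_word G ((x, b) # xs) = (if b then x else inv\<^bsub>G\<^esub> x) \<otimes>\<^bsub>G\<^esub> eval_word G xs"
  by (simp add: eval_word_def)

context group begin

lemma eval_carrier: "fst ` set w \<subseteq> carrier G \<Longrightarrow> eval_word G w \<in> carrier G"
  by (induction w) (auto simp: eval_word_def)

lemma eval_append: "fst ` set xs \<subseteq> carrier G \<Longrightarrow> fst ` set ys \<subseteq> carrier G \<Longrightarrow>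
  eval_word G (xs @ ys) = eval_word G xs \<otimes> eval_word G ys"
proof (induction xs)
  case Nil then show ?case using eval_carrier[of ys] by (simp add: eval_word_def)
next
  case (Cons a xs)
  obtain x b where a: "a = (x, b)" by fastforce
  have ex: "eval_word G (a # xs) = (if b then x else inv x) \<otimes> eval_word G xs"
    for xs by (simp add: eval_word_def a)
  show ?case using Cons eval_carrier[of xs] eval_carrier[of ys] a
    by (cases b) (simp_all add: eval_Cons m_assoc)
qed

lemma eval_cancel_mid:
  assumes "fst ` set xs \<subseteq> carrier G" "fst ` set ys \<subseteq> carrier G" "canc a b" "fst a \<in> carrier G"
  shows "eval_word G (xs @ [a, b] @ ys) = eval_word G (xs @ ys)"
  using assms(1)
proof (induction xs)
  case Nil
  obtain x b1 b2 where ab: "a = (x, b1)" "b = (x, b2)" "b2 = (\<not> b1)"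
    using assms(3) unfolding canc_def by (cases a; cases b) auto
  have x: "x \<in> carrier G" using assms(4) ab by simp
  have e: "eval_word G ys \<in> carrier G" using eval_carrier[OF assms(2)] .
  show ?case
  proof (cases b1)
    case True
    then show ?thesis using ab x e by (simp add: eval_Cons m_assoc[symmetric])
  next
    case False
    then show ?thesis using ab x e by (simp add: eval_Cons m_assoc[symmetric])
  qed
next
  case (Cons c xs)
  obtain x b1 where c: "c = (x, b1)" by fastforce
  then show ?case using Cons by (simp add: eval_Cons)
qed

lemma eval_canc: "canc a b \<Longrightarrow> fst a \<in> carrier G \<Longrightarrow> eval_word G [a, b] = \<one>"
  by (cases a; cases b) (auto simp: canc_def eval_word_def)

lemma eval_single: "fst a \<in> carrier G \<Longrightarrow> eval_word G [a] \<in> carrier G"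
  using eval_carrier[of "[a]"] by simp

lemma pal_aux:
  assumes "A \<subseteq> carrier G" "fst ` set u \<subseteq> A" "fst ` set m \<subseteq> A" "length m \<le> 1"
  shows "eval_word G (u @ m @ rev u) \<in> palindromes G A"
  using assms(2-4)
proof (induction "length u" arbitrary: u m rule: less_induct)
  case less
  have Ac: "\<And>w. fst ` set w \<subseteq> A \<Longrightarrow> fst ` set w \<subseteq> carrier G" using assms(1) by blast
  show ?case
  proof (cases "red (u @ m @ rev u)")
    case True
    have "rev m = m" using less.prems(3) by (cases m) auto
    moreover have "fst ` set (u @ m @ rev u) \<subseteq> A" using less.prems by auto
    ultimately show ?thesis unfolding palindromes_def using True
      by (intro imageI CollectI conjI) (simp_all add: reduced_red)
  next
    case False
    have mred: "red m" using less.prems(3) by (cases m rule: red.cases) auto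
    consider "\<not> red u" | c where "m = [c]" "u \<noteq> []" "canc (last u) c"
    proof -
      have "m = [] \<or> (\<exists>c. m = [c])" using less.prems(3)
        by (cases m) auto
      then show ?thesis
      proof
        assume m: "m = []"
        have "\<not> red (u @ rev u)" using False m by simp
        then have "\<not> red u \<or> \<not> red (rev u) \<or> (u \<noteq> [] \<and> canc (last u) (hd (rev u)))"
          unfolding red_append by blast
        moreover have "u \<noteq> [] \<Longrightarrow> hd (rev u) = last u" by (simp add: hd_rev)
        ultimately have "\<not> red u" unfolding red_rev canc_def by auto
        then show ?thesis using that(1) by blast
      next
        assume "\<exists>c. m = [c]"
        then obtain c where m: "m = [c]" by blast
        have "\<not> red (u @ (c # rev u))" using False m by simp
        then have "\<not> red u \<or> \<not> red (c # rev u) \<or> (u \<noteq> [] \<and> canc (last u) c)"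
          unfolding red_append by simp
        then have "\<not> red u \<or> \<not> red (rev u) \<or> (rev u \<noteq> [] \<and> canc c (hd (rev u))) \<or> (u \<noteq> [] \<and> canc (last u) c)"
          unfolding red_Cons by blast
        moreover have "u \<noteq> [] \<Longrightarrow> hd (rev u) = last u" by (simp add: hd_rev)
        ultimately have "\<not> red u \<or> (u \<noteq> [] \<and> canc (last u) c)"
          unfolding red_rev using canc_sym[of c "last u"] by auto
        then show ?thesis using that m by blast
      qed
    qed
    then show ?thesis
    proof cases
      case 1
      then obtain u1 a b u2 where u: "u = u1 @ [a, b] @ u2" "canc a b" using not_red by blast
      let ?v = "u1 @ u2"
      have lt: "length ?v < length u" using u by simp
      have IH: "eval_word G (?v @ m @ rev ?v) \<in> palindromes G A"
        using less.hyps[OF lt] less.prems u by auto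
      have ab: "eval_word G [a, b] = \<one>" "eval_word G [b, a] = \<one>"
        using u(2) less.prems(1) assms(1) by (auto simp: eval_canc canc_sym u)
      have c1: "fst ` set u1 \<subseteq> carrier G" "fst ` set u2 \<subseteq> carrier G" "fst a \<in> carrier G"
        "fst b \<in> carrier G" "fst ` set m \<subseteq> carrier G"
        using less.prems u assms(1) by auto
      have e1: "u @ m @ rev u = u1 @ [a, b] @ (u2 @ m @ rev u2 @ [b, a] @ rev u1)"
        using u by simp
      have e2: "u1 @ (u2 @ m @ rev u2 @ [b, a] @ rev u1) = (u1 @ u2 @ m @ rev u2) @ [b, a] @ rev u1"
        by simp
      have "eval_word G (u @ m @ rev u) = eval_word G (u1 @ (u2 @ m @ rev u2 @ [b, a] @ rev u1))"
        unfolding e1 by (rule eval_cancel_mid) (use c1 u(2) in auto)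
      also have "\<dots> = eval_word G ((u1 @ u2 @ m @ rev u2) @ rev u1)"
        unfolding e2 by (rule eval_cancel_mid) (use c1 u(2) canc_sym[of a b] in auto)
      also have "(u1 @ u2 @ m @ rev u2) @ rev u1 = ?v @ m @ rev ?v" by simp
      finally show ?thesis using IH by simp
    next
      case 2
      obtain u' a where u: "u = u' @ [a]" using 2(2) by (metis rev_exhaust)
      have ca: "canc a c" using 2 u by simp
      have lt: "length u' < length u" using u by simp
      have IH: "eval_word G (u' @ [a] @ rev u') \<in> palindromes G A"
        using less.hyps[OF lt, of "[a]"] less.prems u by auto
      have ac: "eval_word G [a, c] = \<one>" using ca less.prems assms(1) u by (auto simp: eval_canc)
      have c1: "fst ` set u' \<subseteq> carrier G" "fst a \<in> carrier G"
        using less.prems u assms(1) by auto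
      have "u @ m @ rev u = u' @ [a, c] @ [a] @ rev u'" using u 2 by simp
      moreover have "eval_word G (u' @ [a, c] @ [a] @ rev u') = eval_word G (u' @ [a] @ rev u')"
        by (rule eval_cancel_mid) (use c1 ca in auto)
      ultimately show ?thesis using IH by simp
    qed
  qed
qed

lemma pal_any:
  assumes "A \<subseteq> carrier G" "fst ` set w \<subseteq> A" "rev w = w"
  shows "eval_word G w \<in> palindromes G A"
proof -
  define n where "n = length w"
  define k where "k = n div 2"
  let ?u = "take k w" and ?m = "take (n - 2 * k) (drop k w)"
  have r: "rev ?u = drop (n - k) w"
    by (metis assms(3) rev_take n_def)
  have d: "drop (n - 2 * k) (drop k w) = drop (n - k) w"
    by (simp add: k_def add.commute diff_diff_left)
  have "drop k w = ?m @ drop (n - 2*k) (drop k w)" by (rule append_take_drop_id[symmetric])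
  then have "drop k w = ?m @ rev ?u" using r d by simp
  then have w: "w = ?u @ ?m @ rev ?u"
    using append_take_drop_id[of k w] by simp
  have lm: "length ?m \<le> 1" by (simp add: k_def n_def)
  have "eval_word G (?u @ ?m @ rev ?u) \<in> palindromes G A"
    apply (rule pal_aux[OF assms(1) _ _ lm])
    using assms(2) set_take_subset set_drop_subset by fastforce+
  then show ?thesis using w by simp
qed

lemma pal_carrier: "A \<subseteq> carrier G \<Longrightarrow> palindromes G A \<subseteq> carrier G"
  unfolding palindromes_def using eval_carrier by blast

lemma prodl_append: "set ps \<subseteq> carrier G \<Longrightarrow> set qs \<subseteq> carrier G \<Longrightarrow>
  foldr (\<lambda>p acc. p \<otimes> acc) (ps @ qs) \<one> = foldr (\<lambda>p acc. p \<otimes> acc) ps \<one> \<otimes> foldr (\<lambda>p acc. p \<otimes> acc) qs \<one>"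
proof (induction ps)
  case Nil
  have "foldr (\<lambda>p acc. p \<otimes> acc) qs \<one> \<in> carrier G" using Nil(2) by (induction qs) auto
  then show ?case by simp
next
  case (Cons a ps)
  have "foldr (\<lambda>p acc. p \<otimes> acc) qs \<one> \<in> carrier G" using Cons(3) by (induction qs) auto
  moreover have "foldr (\<lambda>p acc. p \<otimes> acc) ps \<one> \<in> carrier G" using Cons(2) by (induction ps) auto
  ultimately show ?case using Cons by (simp add: m_assoc)
qed

lemma prodl_carrier: "set ps \<subseteq> carrier G \<Longrightarrow> foldr (\<lambda>p acc. p \<otimes> acc) ps \<one> \<in> carrier G"
  by (induction ps) auto

end

lemma (in group_hom) hom_eval:
  "fst ` set w \<subseteq> carrier G \<Longrightarrow> h (eval_word G w) = eval_word H (map (\<lambda>(x, b). (h x, b)) w)"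
proof (induction w)
  case Nil then show ?case by (simp add: eval_word_def)
next
  case (Cons a w)
  obtain x b where a: "a = (x, b)" by fastforce
  have x: "x \<in> carrier G" and w: "fst ` set w \<subseteq> carrier G" using Cons(2) a by auto
  have e: "eval_word G w \<in> carrier G" using G.eval_carrier[OF w] .
  have IH: "h (eval_word G w) = eval_word H (map (\<lambda>(x, b). (h x, b)) w)" using Cons(1) w .
  show ?case
  proof (cases b)
    case True
    then show ?thesis using x e IH a by (simp only: eval_Cons list.map split if_True hom_mult)
  next
    case False
    then show ?thesis using x e IH a
      by (simp only: eval_Cons list.map split if_False hom_mult G.inv_closed hom_inv)
  qed
qed

lemma (in group_hom) hom_prodl:
  "set ps \<subseteq> carrier G \<Longrightarrow> h (foldr (\<lambda>p acc. p \<otimes>\<^bsub>G\<^esub> acc) ps \<one>\<^bsub>G\<^esub>)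
     = foldr (\<lambda>p acc. p \<otimes>\<^bsub>H\<^esub> acc) (map h ps) \<one>\<^bsub>H\<^esub>"
proof (induction ps)
  case (Cons a ps)
  have "a \<in> carrier G" "set ps \<subseteq> carrier G" using Cons(2) by auto
  then show ?case using Cons(1) G.prodl_carrier[of ps] by (simp only: foldr_Cons list.map o_apply hom_mult)
qed simp

lemma pal_length_attained:
  assumes "pal_length G A g \<noteq> \<infinity>"
  shows "\<exists>ps. set ps \<subseteq> palindromes G A \<and> foldr (\<lambda>p acc. p \<otimes>\<^bsub>G\<^esub> acc) ps \<one>\<^bsub>G\<^esub> = g
     \<and> enat (length ps) = pal_length G A g"
proof -
  let ?X = "(\<lambda>ps. enat (length ps)) ` {ps.
      set ps \<subseteq> palindromes G A \<and> foldr (\<lambda>p acc. p \<otimes>\<^bsub>G\<^esub> acc) ps \<one>\<^bsub>G\<^esub> = g}"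
  have ne: "?X \<noteq> {}"
  proof
    assume e: "?X = {}"
    have "pal_length G A g = \<infinity>" unfolding pal_length_def e Inf_empty top_enat_def by (rule refl)
    then show False using assms by contradiction
  qed
  then have "Inf ?X = (LEAST x. x \<in> ?X)" unfolding Inf_enat_def by (simp only: if_False)
  moreover obtain x0 where "x0 \<in> ?X" using ne by blast
  then have "(LEAST x. x \<in> ?X) \<in> ?X" by (rule LeastI)
  ultimately have "Inf ?X \<in> ?X" by (simp only:)
  then have "\<exists>ps \<in> {ps. set ps \<subseteq> palindromes G A \<and> foldr (\<lambda>p acc. p \<otimes>\<^bsub>G\<^esub> acc) ps \<one>\<^bsub>G\<^esub> = g}. Inf ?X = enat (length ps)"
    by (simp only: image_iff)
  then obtain ps where ps: "ps \<in> {ps. set ps \<subseteq> palindromes G A \<and> foldr (\<lambda>p acc. p \<otimes>\<^bsub>G\<^esub> acc) ps \<one>\<^bsub>G\<^esub> = g}"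
    "Inf ?X = enat (length ps)" by (rule bexE)
  have A: "set ps \<subseteq> palindromes G A \<and> foldr (\<lambda>p acc. p \<otimes>\<^bsub>G\<^esub> acc) ps \<one>\<^bsub>G\<^esub> = g"
    using ps(1) by (rule CollectD)
  have eq: "pal_length G A g = Inf ?X" unfolding pal_length_def by (rule refl)
  have L: "enat (length ps) = pal_length G A g" using ps(2) eq by (simp only:)
  show ?thesis by (intro exI[of _ ps] conjI conjunct1[OF A] conjunct2[OF A] L)
qed

lemma lift_pal:
  assumes hom: "group_hom G K f" and S: "S \<subseteq> carrier G"
    and q: "q \<in> palindromes K (f ` S)"
  shows "\<exists>p \<in> palindromes G S. f p = q"
proof -
  interpret group_hom G K f by (rule hom)
  obtain w' where w': "q = eval_word K w'" "fst ` set w' \<subseteq> f ` S" "rev w' = w'"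
    using q unfolding palindromes_def by auto
  define rep where "rep C = (SOME x. x \<in> S \<and> f x = C)" for C
  have rep: "C \<in> f ` S \<Longrightarrow> rep C \<in> S \<and> f (rep C) = C" for C
    unfolding rep_def by (rule someI_ex) auto
  define w where "w = map (\<lambda>(C, b). (rep C, b)) w'"
  have wS: "fst ` set w \<subseteq> S" using w'(2) rep by (auto simp: w_def)
  have wr: "rev w = w" using w'(3) unfolding w_def by (metis rev_map)
  have mw: "map (\<lambda>(x, b). (f x, b)) w = w'"
    unfolding w_def using w'(2) rep by (induction w') auto
  have "eval_word G w \<in> palindromes G S" using G.pal_any[OF S wS wr] .
  moreover have "f (eval_word G w) = q" using hom_eval[of w] wS S mw w'(1) by auto
  ultimately show ?thesis by blast
qed

lemma proj_pal:
  assumes hom: "group_hom G K f" and S: "S \<subseteq> carrier G"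
    and p: "p \<in> palindromes G S"
  shows "f p \<in> palindromes K (f ` S)"
proof -
  interpret group_hom G K f by (rule hom)
  obtain w where w: "p = eval_word G w" "fst ` set w \<subseteq> S" "rev w = w"
    using p unfolding palindromes_def by auto
  let ?w = "map (\<lambda>(x, b). (f x, b)) w"
  have "f p = eval_word K ?w" using hom_eval[of w] w S by auto
  moreover have "eval_word K ?w \<in> palindromes K (f ` S)"
    apply (rule H.pal_any)
    using S w(2) apply auto[2]
    using w(3) by (metis rev_map)
  ultimately show ?thesis by simp
qed

theorem lemma2p6:
  fixes G :: "('a, 'b) monoid_scheme" and S H :: "'a set"
  assumes "group G"
    and "S \<subseteq> carrier G"
    and "generate G S = carrier G"
    and "H \<lhd> G"
  shows "pw (G Mod H) ((\<lambda>x. H #>\<^bsub>G\<^esub> x) ` S) \<le> pw G S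
       \<and> pw G S \<le> pw (G Mod H) ((\<lambda>x. H #>\<^bsub>G\<^esub> x) ` S) + pw_sub G S H"
proof -
  interpret N: normal H G by (rule assms(4))
  let ?Q = "G Mod H" and ?f = "\<lambda>x. H #>\<^bsub>G\<^esub> x"
  have gh: "group_hom G ?Q ?f"
    by (simp add: group_hom_def group_hom_axioms_def assms(1) N.factorgroup_is_group N.r_coset_hom_Mod)
  interpret F: group_hom G ?Q ?f by (rule gh)
  have SQ: "?f ` S \<subseteq> carrier ?Q" using assms(2) by auto
  have cQ: "carrier ?Q = ?f ` carrier G" by (rule carrier_FactGroup)
  define PL where "PL = (\<lambda>K A ps. set ps \<subseteq> palindromes K A)"
  have step1: "pal_length ?Q (?f ` S) (?f g) \<le> pal_length G S g" if g: "g \<in> carrier G" for g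
    unfolding pal_length_def
  proof (rule Inf_mono)
    fix n assume "n \<in> (\<lambda>ps. enat (length ps)) ` {ps. set ps \<subseteq> palindromes G S \<and> foldr (\<lambda>p acc. p \<otimes>\<^bsub>G\<^esub> acc) ps \<one>\<^bsub>G\<^esub> = g}"
    then obtain ps where ps: "set ps \<subseteq> palindromes G S" "foldr (\<lambda>p acc. p \<otimes>\<^bsub>G\<^esub> acc) ps \<one>\<^bsub>G\<^esub> = g"
      "n = enat (length ps)" by auto
    have pc: "set ps \<subseteq> carrier G" using ps(1) group.pal_carrier[OF assms(1) assms(2)] by auto
    have "set (map ?f ps) \<subseteq> palindromes ?Q (?f ` S)"
      using ps(1) proj_pal[OF gh assms(2)] by auto
    moreover have "foldr (\<lambda>p acc. p \<otimes>\<^bsub>?Q\<^esub> acc) (map ?f ps) \<one>\<^bsub>?Q\<^esub> = ?f g"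
      using F.hom_prodl[OF pc] ps(2) by simp
    ultimately have mem: "map ?f ps \<in> {ps. set ps \<subseteq> palindromes ?Q (?f ` S) \<and> foldr (\<lambda>p acc. p \<otimes>\<^bsub>?Q\<^esub> acc) ps \<one>\<^bsub>?Q\<^esub> = ?f g}"
      by (intro CollectI conjI)
    show "\<exists>m \<in> (\<lambda>ps. enat (length ps)) ` {ps. set ps \<subseteq> palindromes ?Q (?f ` S) \<and> foldr (\<lambda>p acc. p \<otimes>\<^bsub>?Q\<^esub> acc) ps \<one>\<^bsub>?Q\<^esub> = ?f g}. m \<le> n"
      by (rule bexI[OF _ imageI[OF mem]]) (simp add: ps(3))
  qed
  have part1: "pw ?Q (?f ` S) \<le> pw G S"
    unfolding pw_def pw_sub_def
  proof (rule SUP_least)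
    fix C assume "C \<in> carrier ?Q"
    then obtain g where g: "g \<in> carrier G" "C = ?f g" using cQ by auto
    have "pal_length ?Q (?f ` S) C \<le> pal_length G S g" using step1[OF g(1)] g(2) by simp
    also have "\<dots> \<le> (SUP g\<in>carrier G. pal_length G S g)" using g(1) by (rule SUP_upper)
    finally show "pal_length ?Q (?f ` S) C \<le> (SUP g\<in>carrier G. pal_length G S g)" .
  qed
  have step2: "pal_length G S g \<le> pw ?Q (?f ` S) + pw_sub G S H" if g: "g \<in> carrier G" for g
  proof -
    have le1: "pal_length ?Q (?f ` S) (?f g) \<le> pw ?Q (?f ` S)"
      unfolding pw_def pw_sub_def by (rule SUP_upper[OF F.hom_closed[OF g]])
    show ?thesis
    proof (cases "pal_length ?Q (?f ` S) (?f g) = \<infinity>")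
      case True
      then have "pw ?Q (?f ` S) = \<infinity>" using le1 True by (metis enat_ord_simps(5))
      then show ?thesis by (simp only: plus_enat_simps(2) enat_ord_simps(3))
    next
      case False
      then obtain qs where qs: "set qs \<subseteq> palindromes ?Q (?f ` S)"
        "foldr (\<lambda>p acc. p \<otimes>\<^bsub>?Q\<^esub> acc) qs \<one>\<^bsub>?Q\<^esub> = ?f g"
        "enat (length qs) = pal_length ?Q (?f ` S) (?f g)"
        using pal_length_attained[OF False] by (elim exE conjE)
      define lift where "lift q = (SOME p. p \<in> palindromes G S \<and> ?f p = q)" for q
      have lift: "lift q \<in> palindromes G S \<and> ?f (lift q) = q" if qq: "q \<in> set qs" for q
      proof -
        have "\<exists>p \<in> palindromes G S. ?f p = q" by (rule lift_pal[OF gh assms(2) subsetD[OF qs(1) qq]])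
        then have "\<exists>p. p \<in> palindromes G S \<and> ?f p = q" by (simp only: Bex_def)
        then show ?thesis unfolding lift_def by (rule someI_ex)
      qed
      define ps where "ps = map lift qs"
      have psP: "set ps \<subseteq> palindromes G S" unfolding ps_def using lift by (induction qs) auto
      have pc: "set ps \<subseteq> carrier G" using psP group.pal_carrier[OF assms(1) assms(2)] by (rule subset_trans)
      have mps: "map ?f ps = qs" unfolding ps_def using lift by (induction qs) auto
      define P where "P = foldr (\<lambda>p acc. p \<otimes>\<^bsub>G\<^esub> acc) ps \<one>\<^bsub>G\<^esub>"
      have Pc: "P \<in> carrier G" unfolding P_def by (rule group.prodl_carrier[OF assms(1) pc])
      have fP: "?f P = ?f g" unfolding P_def by (simp only: F.hom_prodl[OF pc] mps qs(2))
      define h where "h = inv\<^bsub>G\<^esub> P \<otimes>\<^bsub>G\<^esub> g"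
      have hc: "h \<in> carrier G" unfolding h_def by (rule monoid.m_closed[OF group.is_monoid[OF assms(1)] group.inv_closed[OF assms(1) Pc] g])
      have a1: "?f h = ?f (inv\<^bsub>G\<^esub> P) \<otimes>\<^bsub>?Q\<^esub> ?f g"
        unfolding h_def by (rule F.hom_mult[OF group.inv_closed[OF assms(1) Pc] g])
      have a2: "?f (inv\<^bsub>G\<^esub> P) = inv\<^bsub>?Q\<^esub> (?f g)" using F.hom_inv[OF Pc] fP by (simp only:)
      have a3: "inv\<^bsub>?Q\<^esub> (?f g) \<otimes>\<^bsub>?Q\<^esub> ?f g = \<one>\<^bsub>?Q\<^esub>"
        by (rule group.l_inv[OF N.factorgroup_is_group F.hom_closed[OF g]])
      have "?f h = H" using a1 a2 a3 by (simp only: one_FactGroup)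
      then have hH: "h \<in> H" using group.rcos_self[OF assms(1) hc N.subgroup_axioms] by (simp only:)
      have gPh: "g = P \<otimes>\<^bsub>G\<^esub> h" using group.inv_solve_left[OF assms(1) hc Pc g] h_def by blast
      have le2: "pal_length G S h \<le> pw_sub G S H" unfolding pw_sub_def using hH by (rule SUP_upper)
      show ?thesis
      proof (cases "pal_length G S h = \<infinity>")
        case True
        then have "pw_sub G S H = \<infinity>" using le2 True by (metis enat_ord_simps(5))
        then show ?thesis by (simp only: plus_enat_simps(3) enat_ord_simps(3))
      next
        case False
        then obtain hs where hs: "set hs \<subseteq> palindromes G S"
          "foldr (\<lambda>p acc. p \<otimes>\<^bsub>G\<^esub> acc) hs \<one>\<^bsub>G\<^esub> = h"
          "enat (length hs) = pal_length G S h"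
          using pal_length_attained[OF False] by (elim exE conjE)
        have hsc: "set hs \<subseteq> carrier G" using hs(1) group.pal_carrier[OF assms(1) assms(2)] by (rule subset_trans)
        have "foldr (\<lambda>p acc. p \<otimes>\<^bsub>G\<^esub> acc) (ps @ hs) \<one>\<^bsub>G\<^esub> = g"
          using group.prodl_append[OF assms(1) pc hsc] hs(2) gPh unfolding P_def by (simp only:)
        moreover have "set (ps @ hs) \<subseteq> palindromes G S" using psP hs(1) by auto
        ultimately have "pal_length G S g \<le> enat (length (ps @ hs))"
          unfolding pal_length_def by (intro Inf_lower image_eqI[OF refl] CollectI conjI)
        also have "\<dots> = enat (length qs) + enat (length hs)" by (simp add: ps_def)
        also have "\<dots> = pal_length ?Q (?f ` S) (?f g) + pal_length G S h" using qs(3) hs(3) by simp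
        also have "\<dots> \<le> pw ?Q (?f ` S) + pw_sub G S H" using le1 le2 by (rule add_mono)
        finally show ?thesis .
      qed
    qed
  qed
  have part2: "pw G S \<le> pw ?Q (?f ` S) + pw_sub G S H"
    unfolding pw_def[of G] pw_sub_def[of G S "carrier G"] by (rule SUP_least) (rule step2)
  show ?thesis using part1 part2 by simp
qed

end
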